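(* Suppose we have $n\ge3$ agents with additive, identical, normalized valuations, provided with a prediction of accuracy $\eta<1-\frac{1-a^2}{4+(2n-3)a}$ for some given $a\in(0,1]$; that is, the allowed error between the prediction and the true valuation is $1-\eta>\frac{1-a^2}{4+(2n-3)a}$. Then there is no online algorithm that guarantees an $a$-EFX allocation for all instances with error at most $1-\eta$, even when $T'=T=2n-1$ and the prediction and the true valuation are $3$-value functions.
   Context: Online fair division with predictions and identical valuations: agents $[n]$; goods $g_1,\dots,g_T$ arrive one per time step; all agents share a true additive normalized valuation $v$ ($v(g_t)\ge0$, $\sum_{t\in[T]}v(g_t)=1$, $v(S)=\sum_{g\in S}v(g)$), and before any arrival the algorithm receives a prediction $p=(p(g_1),\dots,p(g_{T'}))$ (an additive normalized valuation over $T'$ predicted goods) and the accuracy level. Error $\frac12\sum_{t=1}^{\max\{T,T'\}}|p(g_t)-v(g_t)|$ (missing entries set to $0$); accuracy $\eta$ means the error is at most $1-\eta$. At time $t$, $v(g_t)$ is revealed and $g_t$ must be irrevocably allocated. For $S\ne\emptyset$, $\bar S=S\setminus\{g\}$ with $g\in\arg\max_{g'\in S}v(S\setminus\{g'\})$, $\bar\emptyset=\emptyset$. An allocation is $a$-EFX if $v(A_i)\ge a\cdot v(\bar A_j)$ for all $i,j$. A function is $k$-value if it takes at most $k$ distinct values. *)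

theory Defs
  imports Complex_Main
begin

text \<open>Goods are indexed 0,...,T-1; a valuation over T goods is a real list of length T.
  Agents are 0,...,n-1.\<close>

definition entry :: "real list \<Rightarrow> nat \<Rightarrow> real" where
  "entry xs t = (if t < length xs then xs ! t else 0)"

definition normalized_valuation :: "real list \<Rightarrow> bool" where
  "normalized_valuation v \<longleftrightarrow> (\<forall>t < length v. v ! t \<ge> 0) \<and> sum_list v = 1"

definition pred_error :: "real list \<Rightarrow> real list \<Rightarrow> real" where
  "pred_error p v = (1/2) * (\<Sum>t < max (length v) (length p). \<bar>entry p t - entry v t\<bar>)"

definition k_value :: "nat \<Rightarrow> real list \<Rightarrow> bool" where
  "k_value k v \<longleftrightarrow> card (set v) \<le> k"

definition bval :: "real list \<Rightarrow> nat set \<Rightarrow> real" where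
  "bval v S = (\<Sum>t\<in>S. entry v t)"

definition bval_bar :: "real list \<Rightarrow> nat set \<Rightarrow> real" where
  "bval_bar v S = (if S = {} then 0 else Max ((\<lambda>g. bval v (S - {g})) ` S))"

definition is_aEFX :: "real \<Rightarrow> nat \<Rightarrow> real list \<Rightarrow> (nat \<Rightarrow> nat set) \<Rightarrow> bool" where
  "is_aEFX a n v A \<longleftrightarrow> (\<forall>i < n. \<forall>j < n. bval v (A i) \<ge> a * bval_bar v (A j))"

text \<open>A deterministic online algorithm gets the prediction p and the values of the goods
  revealed so far (v(g_1),...,v(g_t)) and returns the agent receiving g_t.\<close>
definition online_alloc :: "(real list \<Rightarrow> real list \<Rightarrow> nat) \<Rightarrow> real list \<Rightarrow> real list \<Rightarrow> nat \<Rightarrow> nat set" where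
  "online_alloc alg p v i = {t. t < length v \<and> alg p (take (Suc t) v) = i}"

end

theory Submission
  imports Defs
begin

definition mkv :: "nat \<Rightarrow> (nat \<Rightarrow> real) \<Rightarrow> real list" where
  "mkv L g = map (\<lambda>t. if t < L then g t else 1 - (\<Sum>s<L. g s)) [0..<Suc L]"

lemma mkv_length[simp]: "length (mkv L g) = Suc L"
  by (simp add: mkv_def)

lemma mkv_entry: "entry (mkv L g) t = (if t < L then g t else if t = L then 1 - (\<Sum>s<L. g s) else 0)"
  by (auto simp add: entry_def mkv_def nth_append simp del: upt_Suc)

lemma mkv_sum: "sum_list (mkv L g) = 1"
proof -
  have "sum_list (mkv L g) = (\<Sum>t\<in>{0..<Suc L}. (if t < L then g t else 1 - (\<Sum>s<L. g s)))"
    unfolding mkv_def by (simp only: interv_sum_list_conv_sum_set_nat set_upt)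
  also have "\<dots> = (\<Sum>t<L. g t) + (1 - (\<Sum>s<L. g s))"
    by (simp add: atLeast0LessThan)
  finally show ?thesis by simp
qed

lemma mkv_norm:
  assumes "\<And>t. t < L \<Longrightarrow> g t \<ge> 0" and "(\<Sum>s<L. g s) \<le> 1"
  shows "normalized_valuation (mkv L g)"
  unfolding normalized_valuation_def
proof
  show "\<forall>t<length (mkv L g). 0 \<le> mkv L g ! t"
    using assms by (auto simp add: mkv_def nth_append simp del: upt_Suc)
  show "sum_list (mkv L g) = 1" by (rule mkv_sum)
qed

lemma mkv_set: "set (mkv L g) \<subseteq> g ` {..<L} \<union> {1 - (\<Sum>s<L. g s)}"
  by (auto simp add: mkv_def)

lemma mkv_err: "pred_error (mkv L g) (mkv L h) \<le> (\<Sum>t<L. \<bar>g t - h t\<bar>)"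
proof -
  have "pred_error (mkv L g) (mkv L h) = (1/2) * (\<Sum>t<Suc L. \<bar>entry (mkv L g) t - entry (mkv L h) t\<bar>)"
    by (simp add: pred_error_def)
  also have "(\<Sum>t<Suc L. \<bar>entry (mkv L g) t - entry (mkv L h) t\<bar>)
      = (\<Sum>t<L. \<bar>g t - h t\<bar>) + \<bar>(\<Sum>s<L. h s) - (\<Sum>s<L. g s)\<bar>"
    by (simp add: mkv_entry)
  also have "\<bar>(\<Sum>s<L. h s) - (\<Sum>s<L. g s)\<bar> \<le> (\<Sum>t<L. \<bar>g t - h t\<bar>)"
  proof -
    have "\<bar>(\<Sum>s<L. h s) - (\<Sum>s<L. g s)\<bar> = \<bar>\<Sum>s<L. h s - g s\<bar>" by (simp add: sum_subtractf)
    also have "\<dots> \<le> (\<Sum>s<L. \<bar>h s - g s\<bar>)" by (rule sum_abs)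
    finally show ?thesis by (simp add: abs_minus_commute)
  qed
  finally show ?thesis by simp
qed

lemma mkv_take:
  assumes "t < L" and "\<And>s. s \<le> t \<Longrightarrow> g s = h s"
  shows "take (Suc t) (mkv L g) = take (Suc t) (mkv L h)"
proof -
  have "take (Suc t) [0..<Suc L] = [0..<Suc t]" using assms(1) by (simp add: take_upt del: upt_Suc)
  then show ?thesis using assms unfolding mkv_def
    by (simp add: take_map del: upt_Suc)
qed

lemma card3: "card {x,y,z::real} \<le> 3" by (simp add: card_insert_if)

lemma entry_nonneg: "normalized_valuation v \<Longrightarrow> entry v t \<ge> 0"
  by (auto simp add: normalized_valuation_def entry_def)

lemma bval_mono: "normalized_valuation v \<Longrightarrow> A \<subseteq> B \<Longrightarrow> finite B \<Longrightarrow> bval v A \<le> bval v B"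
  unfolding bval_def by (rule sum_mono2) (auto intro: entry_nonneg)

lemma bval_ge: "normalized_valuation v \<Longrightarrow> finite A \<Longrightarrow> t \<in> A \<Longrightarrow> entry v t \<le> bval v A"
  unfolding bval_def by (rule member_le_sum) (auto intro: entry_nonneg)

lemma bar_ge: "finite S \<Longrightarrow> g \<in> S \<Longrightarrow> bval v (S - {g}) \<le> bval_bar v S"
  unfolding bval_bar_def by (auto intro: Max_ge)

lemma alloc_fin: "finite (online_alloc alg p v i)"
  unfolding online_alloc_def by auto

lemma notEFX: "i < n \<Longrightarrow> j < n \<Longrightarrow> bval v (A i) < a * bval_bar v (A j) \<Longrightarrow> \<not> is_aEFX a n v A"
  unfolding is_aEFX_def by force


theorem lemma4p8:
  fixes n :: nat and a \<eta> :: real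
  assumes "n \<ge> 3" and "0 < a" and "a \<le> 1"
    and "\<eta> < 1 - (1 - a^2) / (4 + (2 * real n - 3) * a)"
  shows "\<forall>alg :: real list \<Rightarrow> real list \<Rightarrow> nat.
           (\<forall>p vs. alg p vs < n) \<longrightarrow>
           (\<exists>p v. length p = 2*n - 1 \<and> length v = 2*n - 1 \<and>
                  normalized_valuation p \<and> normalized_valuation v \<and>
                  k_value 3 p \<and> k_value 3 v \<and>
                  pred_error p v \<le> 1 - \<eta> \<and>
                  \<not> is_aEFX a n v (online_alloc alg p v))"
proof (intro allI impI)
  fix alg :: "real list \<Rightarrow> real list \<Rightarrow> nat"
  assume rng: "\<forall>p vs. alg p vs < n"
  define e where "e = 1 - \<eta>"
  have n3: "n \<ge> 3" and a0: "0 < a" and a1: "a \<le> 1" using assms by auto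
  have den: "4 + (2 * real n - 3) * a > 0"
  proof -
    have "2 * real n - 3 > 0" using n3 by simp
    then show ?thesis using a0 by (simp add: add_pos_pos)
  qed
  have "a^2 \<le> 1" using a0 a1 by (simp add: power_le_one)
  then have "(1 - a^2) / (4 + (2 * real n - 3) * a) \<ge> 0" using den by simp
  then have epos: "e > 0" using assms(4) unfolding e_def by linarith
  define L where "L = 2*n - 2"
  have nL: "n < L" using n3 unfolding L_def by simp
  have SL: "Suc L = 2*n - 1" using n3 unfolding L_def by simp
  define X where "X = 2 * real n / a"
  have aX: "a * X = 2 * real n" unfolding X_def using a0 by simp
  have Xpos: "X > 0" unfolding X_def using a0 n3 by simp
  have "a * X \<le> 1 * X" using a1 Xpos by (intro mult_right_mono) auto
  then have X1: "X \<ge> 1" using aX n3 by simp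
  define S where "S = real L + X"
  have Spos: "S > 0" unfolding S_def using Xpos by simp
  define eps where "eps = min e 1 * a / (4 * S)"
  have mpos: "min e 1 > 0" using epos by simp
  have eps_pos: "eps > 0" unfolding eps_def using mpos a0 Spos by simp
  have Seps: "S * eps = min e 1 * a / 4" unfolding eps_def using Spos by simp
  have "min e 1 * a \<le> min e 1 * 1" using mpos a1 by (intro mult_left_mono) auto
  then have Seps_e: "S * eps \<le> e" and Seps_q: "S * eps \<le> 1/4" using Seps mult_pos_pos[OF mpos a0] by auto
  have "min e 1 * a \<le> 1 * a" using mpos a0 by (intro mult_right_mono) auto
  then have Seps_a: "S * eps \<le> a / 4" using Seps by simp
  have Leps: "real L * eps \<le> S * eps" and Xeps: "X * eps \<le> S * eps"
    unfolding S_def using eps_pos Xpos by (auto simp: distrib_right)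
  have Leps1: "real L * eps \<le> 1" using Leps Seps_q by linarith
  have Seps1: "S * eps \<le> 1" using Seps_q by linarith
  define gp where "gp = (\<lambda>t::nat. eps)"
  define gs where "gs = (\<lambda>t::nat. if t = n then X*eps else eps)"
  define gw where "gw = (\<lambda>j t::nat. if t \<le> j then eps else (0::real))"
  define p where "p = mkv L gp"
  define vs where "vs = mkv L gs"
  have sgp: "sum gp {..<L} = real L * eps" unfolding gp_def by simp
  have "sum gs {..<L} \<le> sum (\<lambda>t. eps + (if t = n then X*eps else 0)) {..<L}"
    by (rule sum_mono) (use eps_pos in \<open>auto simp: gs_def\<close>)
  also have "\<dots> = real L * eps + X * eps" using nL by (simp add: sum.distrib)
  finally have sgs: "sum gs {..<L} \<le> S * eps" unfolding S_def by (simp add: distrib_right)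
  have sgw: "sum (gw j) {..<L} \<le> S * eps" for j
  proof -
    have "sum (gw j) {..<L} \<le> sum (\<lambda>t. eps) {..<L}"
      by (rule sum_mono) (use eps_pos in \<open>auto simp: gw_def\<close>)
    then show ?thesis using Leps by simp
  qed
  have p_len: "length p = 2*n - 1" unfolding p_def using SL by simp
  have p_norm: "normalized_valuation p" unfolding p_def
    by (rule mkv_norm) (use sgp Leps1 eps_pos in \<open>auto simp: gp_def\<close>)
  have p_k: "k_value 3 p"
  proof -
    have "set p \<subseteq> {eps, eps, 1 - sum gp {..<L}}" using mkv_set[of L gp] unfolding p_def
      by (auto simp: gp_def)
    then have "card (set p) \<le> card {eps, eps, 1 - sum gp {..<L}}" by (intro card_mono) auto
    then show ?thesis unfolding k_value_def using card3 by (meson le_trans)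
  qed
  have vs_len: "length vs = 2*n - 1" unfolding vs_def using SL by simp
  have vs_norm: "normalized_valuation vs" unfolding vs_def
    by (rule mkv_norm) (use sgs Seps1 eps_pos Xpos in \<open>auto simp: gs_def\<close>)
  have vs_k: "k_value 3 vs"
  proof -
    have "set vs \<subseteq> {eps, X*eps, 1 - sum gs {..<L}}" using mkv_set[of L gs] unfolding vs_def
      by (auto simp: gs_def)
    then have "card (set vs) \<le> card {eps, X*eps, 1 - sum gs {..<L}}" by (intro card_mono) auto
    then show ?thesis unfolding k_value_def using card3 by (meson le_trans)
  qed
  have vs_err: "pred_error p vs \<le> 1 - \<eta>"
  proof -
    have Xe: "eps \<le> X * eps" using X1 eps_pos by simp
    have "pred_error p vs \<le> (\<Sum>t<L. \<bar>gp t - gs t\<bar>)" unfolding p_def vs_def by (rule mkv_err)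
    also have "\<dots> \<le> (\<Sum>t<L. (if t = n then X*eps else 0))"
      by (rule sum_mono) (use eps_pos Xe in \<open>auto simp: gp_def gs_def\<close>)
    also have "\<dots> = X * eps" using nL by simp
    finally show ?thesis using Xeps Seps_e unfolding e_def by linarith
  qed
  define f where "f t = alg p (take (Suc t) vs)" for t
  have f_rng: "f t < n" for t unfolding f_def using rng by blast
  have alloc_vs: "online_alloc alg p vs k = {t. t < Suc L \<and> f t = k}" for k
    unfolding online_alloc_def f_def vs_def by simp
  show "\<exists>p v. length p = 2*n - 1 \<and> length v = 2*n - 1 \<and>
                  normalized_valuation p \<and> normalized_valuation v \<and>
                  k_value 3 p \<and> k_value 3 v \<and>
                  pred_error p v \<le> 1 - \<eta> \<and>
                  \<not> is_aEFX a n v (online_alloc alg p v)"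
  proof (cases "\<exists>i j. i < j \<and> j < n - 1 \<and> f i = f j")
    case True
    then obtain i j where ij: "i < j" "j < n - 1" "f i = f j" by blast
    have jL: "j < L" using ij nL by simp
    define w where "w = mkv L (gw j)"
    define fw where "fw t = alg p (take (Suc t) w)" for t
    have fw_eq: "fw t = f t" if "t \<le> j" for t
    proof -
      have "take (Suc t) w = take (Suc t) vs" unfolding w_def vs_def
        by (rule mkv_take) (use that jL ij in \<open>auto simp: gw_def gs_def\<close>)
      then show ?thesis unfolding fw_def f_def by simp
    qed
    have alloc_w: "online_alloc alg p w k = {t. t < Suc L \<and> fw t = k}" for k
      unfolding online_alloc_def fw_def w_def by simp
    have w_norm: "normalized_valuation w" unfolding w_def
      by (rule mkv_norm) (use sgw[of j] Seps1 eps_pos in \<open>auto simp: gw_def\<close>)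
    have w_len: "length w = 2*n - 1" unfolding w_def using SL by simp
    have w_k: "k_value 3 w"
    proof -
      have "set w \<subseteq> {eps, 0, 1 - sum (gw j) {..<L}}" using mkv_set[of L "gw j"] unfolding w_def
        by (auto simp: gw_def)
      then have "card (set w) \<le> card {eps, 0, 1 - sum (gw j) {..<L}}" by (intro card_mono) auto
      then show ?thesis unfolding k_value_def using card3 by (meson le_trans)
    qed
    have w_err: "pred_error p w \<le> 1 - \<eta>"
    proof -
      have "pred_error p w \<le> (\<Sum>t<L. \<bar>gp t - gw j t\<bar>)" unfolding p_def w_def by (rule mkv_err)
      also have "\<dots> \<le> (\<Sum>t<L. eps)"
        by (rule sum_mono) (use eps_pos in \<open>auto simp: gp_def gw_def\<close>)
      also have "\<dots> = real L * eps" by simp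
      finally show ?thesis using Leps Seps_e unfolding e_def by linarith
    qed
    have img: "f ` {0..j} = f ` {0..<j}"
    proof -
      have "{0..j} = insert j {0..<j}" by auto
      moreover have "f j \<in> f ` {0..<j}" using ij by (metis atLeastLessThan_iff image_eqI le0)
      ultimately show ?thesis by auto
    qed
    have "card (insert (fw L) (f ` {0..j})) \<le> Suc (card (f ` {0..j}))" by (rule card_insert_le_m1) auto
    also have "card (f ` {0..j}) \<le> j" using img card_image_le[of "{0..<j}" f] by simp
    finally have cardlt: "card (insert (fw L) (f ` {0..j})) < n" using ij by simp
    have "\<not> {0..<n} \<subseteq> insert (fw L) (f ` {0..j})"
    proof
      assume "{0..<n} \<subseteq> insert (fw L) (f ` {0..j})"
      then have "card {0..<n} \<le> card (insert (fw L) (f ` {0..j}))" by (intro card_mono) auto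
      then show False using cardlt by simp
    qed
    then obtain i0 where i0': "i0 \<in> {0..<n}" "i0 \<notin> insert (fw L) (f ` {0..j})" by blast
    then have i0: "i0 < n" "i0 \<noteq> fw L" "i0 \<notin> f ` {0..j}" by auto
    have zero: "bval w (online_alloc alg p w i0) = 0"
      unfolding bval_def
    proof (rule sum.neutral, rule ballI)
      fix t assume "t \<in> online_alloc alg p w i0"
      then have t: "t < Suc L" "fw t = i0" using alloc_w by auto
      have "t \<noteq> L" using t i0 by auto
      moreover have "\<not> t \<le> j"
      proof
        assume "t \<le> j"
        then have "fw t \<in> f ` {0..j}" using fw_eq by auto
        then show False using t i0 by simp
      qed
      ultimately show "entry w t = 0" using t unfolding w_def by (simp add: mkv_entry gw_def)
    qed
    have mem: "i \<in> online_alloc alg p w (f j)" "j \<in> online_alloc alg p w (f j)"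
      using alloc_w fw_eq ij jL by auto
    have "entry w j \<le> bval w (online_alloc alg p w (f j) - {i})"
      by (rule bval_ge) (use w_norm mem ij alloc_fin in auto)
    also have "\<dots> \<le> bval_bar w (online_alloc alg p w (f j))"
      by (rule bar_ge) (use mem alloc_fin in auto)
    finally have barge: "eps \<le> bval_bar w (online_alloc alg p w (f j))"
      unfolding w_def using jL by (simp add: mkv_entry gw_def)
    have "0 < a * eps" using a0 eps_pos by simp
    also have "\<dots> \<le> a * bval_bar w (online_alloc alg p w (f j))"
      using barge a0 by simp
    finally have "\<not> is_aEFX a n w (online_alloc alg p w)"
      using notEFX[of i0 n "f j" w "online_alloc alg p w" a] i0 f_rng zero by simp
    then show ?thesis using p_len w_len p_norm w_norm p_k w_k w_err by blast
  next
    case False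
    then have inj: "inj_on f {0..<n-1}"
      unfolding inj_on_def by (metis atLeastLessThan_iff linorder_neq_iff)
    have fin: "finite (online_alloc alg p vs k)" for k by (rule alloc_fin)
    have "\<not> is_aEFX a n vs (online_alloc alg p vs)"
    proof (cases "f L \<in> f ` {0..<L}")
      case True
      then obtain s where s: "s < L" "f s = f L" by auto
      define i0 where "i0 = (if f L = 0 then 1 else (0::nat))"
      have i0: "i0 < n" "i0 \<noteq> f L" unfolding i0_def using n3 by auto
      have mem: "s \<in> online_alloc alg p vs (f L)" "L \<in> online_alloc alg p vs (f L)"
        using alloc_vs s by auto
      have "entry vs L \<le> bval vs (online_alloc alg p vs (f L) - {s})"
        by (rule bval_ge) (use vs_norm mem s fin in auto)
      also have "\<dots> \<le> bval_bar vs (online_alloc alg p vs (f L))"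
        by (rule bar_ge) (use mem fin in auto)
      finally have barge: "1 - sum gs {..<L} \<le> bval_bar vs (online_alloc alg p vs (f L))"
        unfolding vs_def by (simp add: mkv_entry)
      have sub: "online_alloc alg p vs i0 \<subseteq> {0..<L}"
        using alloc_vs i0 by (auto simp: less_Suc_eq)
      have "bval vs (online_alloc alg p vs i0) \<le> bval vs {0..<L}"
        by (rule bval_mono) (use vs_norm sub in auto)
      also have "\<dots> = sum gs {..<L}"
        unfolding bval_def vs_def by (simp add: mkv_entry atLeast0LessThan)
      finally have v0: "bval vs (online_alloc alg p vs i0) \<le> S * eps" using sgs by simp
      have "1 - S * eps \<ge> 3/4" using Seps_q by simp
      then have "a * (1 - S * eps) \<ge> a * (3/4)" using a0 by (intro mult_left_mono) auto
      moreover have "a * (1 - S * eps) \<le> a * (1 - sum gs {..<L})" using sgs a0 by (intro mult_left_mono) auto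
      moreover have "a * (1 - sum gs {..<L}) \<le> a * bval_bar vs (online_alloc alg p vs (f L))"
        using barge a0 by (intro mult_left_mono) auto
      ultimately have "bval vs (online_alloc alg p vs i0) < a * bval_bar vs (online_alloc alg p vs (f L))"
        using v0 Seps_a a0 by linarith
      then show ?thesis using notEFX i0 f_rng by blast
    next
      case False2: False
      show ?thesis
      proof (cases "f n \<in> f ` {0..<n}")
        case True
        then obtain s where s: "s < n" "f s = f n" by auto
        have "card {f n, f L} \<le> 2" by (simp add: card_insert_if)
        have "\<not> {0..<n} \<subseteq> {f n, f L}"
        proof
          assume "{0..<n} \<subseteq> {f n, f L}"
          then have "card {0..<n} \<le> card {f n, f L}" by (intro card_mono) auto
          then show False using \<open>card {f n, f L} \<le> 2\<close> n3 by simp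
        qed
        then obtain i0 where i0': "i0 \<in> {0..<n}" "i0 \<notin> {f n, f L}" by blast
        then have i0: "i0 < n" "i0 \<noteq> f n" "i0 \<noteq> f L" by auto
        have mem: "s \<in> online_alloc alg p vs (f n)" "n \<in> online_alloc alg p vs (f n)"
          using alloc_vs s nL by auto
        have "entry vs n \<le> bval vs (online_alloc alg p vs (f n) - {s})"
          by (rule bval_ge) (use vs_norm mem s fin in auto)
        also have "\<dots> \<le> bval_bar vs (online_alloc alg p vs (f n))"
          by (rule bar_ge) (use mem fin in auto)
        finally have barge: "X * eps \<le> bval_bar vs (online_alloc alg p vs (f n))"
          unfolding vs_def using nL by (simp add: mkv_entry gs_def)
        have sub: "online_alloc alg p vs i0 \<subseteq> {0..<L}"
          using alloc_vs i0 by (auto simp: less_Suc_eq)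
        have "bval vs (online_alloc alg p vs i0) = (\<Sum>t\<in>online_alloc alg p vs i0. eps)"
          unfolding bval_def
        proof (rule sum.cong)
          fix t assume "t \<in> online_alloc alg p vs i0"
          then have "t < L" "t \<noteq> n" using sub alloc_vs i0 by auto
          then show "entry vs t = eps" unfolding vs_def by (simp add: mkv_entry gs_def)
        qed simp
        also have "\<dots> = real (card (online_alloc alg p vs i0)) * eps" by simp
        also have "\<dots> \<le> real L * eps"
        proof -
          have "card (online_alloc alg p vs i0) \<le> card {0..<L}" by (rule card_mono) (use sub in auto)
          then show ?thesis using eps_pos by (simp add: mult_right_mono)
        qed
        finally have v0: "bval vs (online_alloc alg p vs i0) \<le> real L * eps" .
        have "real L < 2 * real n" unfolding L_def using n3 by simp
        then have "real L * eps < (2 * real n) * eps" using eps_pos by simp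
        also have "\<dots> = a * (X * eps)" using aX by simp
        also have "\<dots> \<le> a * bval_bar vs (online_alloc alg p vs (f n))"
          using barge a0 by (intro mult_left_mono) auto
        finally show ?thesis using notEFX i0 f_rng v0 by (meson le_less_trans)
      next
        case False3: False
        define Z where "Z = insert (f L) (insert (f n) (f ` {0..<n-1}))"
        have "f n \<notin> f ` {0..<n-1}" using False3 by auto
        moreover have "f L \<notin> insert (f n) (f ` {0..<n-1})" using False2 nL by auto
        ultimately have "card Z = Suc (Suc (n - 1))"
          unfolding Z_def using card_image[OF inj] by simp
        moreover have "Z \<subseteq> {0..<n}" unfolding Z_def using f_rng by auto
        ultimately have "Suc (Suc (n - 1)) \<le> n" by (metis card_atLeastLessThan card_mono diff_zero finite_atLeastLessThan)
        then show ?thesis using n3 by simp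
      qed
    qed
    then show ?thesis using p_len vs_len p_norm vs_norm p_k vs_k vs_err by blast
  qed
qed

end
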